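(* Let $d\in\mathbb{N}$ and let $\mathcal{S}$ be a dictionary of words in $\Sigma^L$. If there exists an origin word for $\mathcal{S}$ that is not good, then there is no $c\in\Sigma^L$ with $\mathrm{dist}(c,s)\le d$ for all $s\in\mathcal{S}$.
   Context: $\mathrm{dist}$ denotes Hamming distance. An origin word for $\mathcal{S}$ is a word $o\in\Sigma^L$ such that for every position $i\in\{1,\ldots,L\}$, $|\{s\in\mathcal{S}: s[i]=o[i]\}|\ge |\mathcal{S}|/(2|\Sigma|)$. An origin word $o$ is good if $\mathrm{dist}(o,s)\le 4|\Sigma|d$ for every $s\in\mathcal{S}$. *)

theory Defs
  imports Complex_Main
begin

definition words :: "'a set \<Rightarrow> nat \<Rightarrow> 'a list set" where
  "words Alph L = {w. length w = L \<and> set w \<subseteq> Alph}"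

definition hdist :: "'a list \<Rightarrow> 'a list \<Rightarrow> nat" where
  "hdist x y = card {i. i < length x \<and> x ! i \<noteq> y ! i}"

definition origin_word :: "'a set \<Rightarrow> nat \<Rightarrow> 'a list set \<Rightarrow> 'a list \<Rightarrow> bool" where
  "origin_word Alph L S w \<longleftrightarrow> w \<in> words Alph L \<and>
     (\<forall>i<L. real (card {s\<in>S. s ! i = w ! i}) \<ge> real (card S) / (2 * real (card Alph)))"

definition good_origin :: "'a set \<Rightarrow> nat \<Rightarrow> 'a list set \<Rightarrow> nat \<Rightarrow> 'a list \<Rightarrow> bool" where
  "good_origin Alph L S d w \<longleftrightarrow> origin_word Alph L S w \<and>
     (\<forall>s\<in>S. hdist w s \<le> 4 * card Alph * d)"

end

theory Submission
  imports Defs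
begin

lemma card_filter_sum: "finite A \<Longrightarrow> card {x\<in>A. P x} = (\<Sum>x\<in>A. if P x then 1 else 0::nat)"
  by (simp add: sum.inter_filter[symmetric])

theorem lemma9:
  fixes Alph :: "'a set" and L d :: nat and S :: "'a list set"
  assumes "finite Alph" and "Alph \<noteq> {}"
    and "S \<subseteq> words Alph L" and "finite S"
    and "\<exists>w. origin_word Alph L S w \<and> \<not> good_origin Alph L S d w"
  shows "\<not> (\<exists>c\<in>words Alph L. \<forall>s\<in>S. hdist c s \<le> d)"
proof
  assume "\<exists>c\<in>words Alph L. \<forall>s\<in>S. hdist c s \<le> d"
  then obtain c where c: "c \<in> words Alph L" and cd: "\<And>s. s \<in> S \<Longrightarrow> hdist c s \<le> d" by blast
  obtain w where ow: "origin_word Alph L S w" and ng: "\<not> good_origin Alph L S d w" using assms(5) by blast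
  define k where "k = card Alph"
  have kpos: "k \<ge> 1" using assms(1,2) k_def by (simp add: Suc_leI card_gt_0_iff)
  obtain s0 where s0: "s0 \<in> S" and far: "hdist w s0 > 4 * k * d" using ng ow k_def
    unfolding good_origin_def by force
  have lw: "length w = L" using ow unfolding origin_word_def words_def by simp
  have lc: "length c = L" using c unfolding words_def by simp
  have ls: "\<And>s. s \<in> S \<Longrightarrow> length s = L" using assms(3) unfolding words_def by auto
  define D where "D = {i. i < L \<and> w ! i \<noteq> c ! i}"
  have finD: "finite D" unfolding D_def by simp
  have Sne: "card S > 0" using s0 assms(4) card_gt_0_iff by blast
  have orig: "\<And>i. i < L \<Longrightarrow> real (card {s\<in>S. s ! i = w ! i}) \<ge> real (card S) / (2 * real k)"
    using ow k_def unfolding origin_word_def by auto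
  have sub: "\<And>s. s \<in> S \<Longrightarrow> card {i\<in>D. s ! i = w ! i} \<le> hdist c s"
  proof -
    fix s assume "s \<in> S"
    have "{i\<in>D. s ! i = w ! i} \<subseteq> {i. i < length c \<and> c ! i \<noteq> s ! i}"
      unfolding D_def using lc by auto
    then show "card {i\<in>D. s ! i = w ! i} \<le> hdist c s" unfolding hdist_def
      by (intro card_mono) auto
  qed
  have "(\<Sum>s\<in>S. card {i\<in>D. s ! i = w ! i}) = (\<Sum>i\<in>D. card {s\<in>S. s ! i = w ! i})"
    using finD assms(4) by (simp add: card_filter_sum sum.swap[of _ S D])
  moreover have "(\<Sum>s\<in>S. card {i\<in>D. s ! i = w ! i}) \<le> (\<Sum>s\<in>S. d)"
    proof (rule sum_mono)
    fix s assume "s \<in> S"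
    from sub[OF this] cd[OF this] show "card {i\<in>D. s ! i = w ! i} \<le> d" by linarith
  qed
  ultimately have A: "real (\<Sum>i\<in>D. card {s\<in>S. s ! i = w ! i}) \<le> real (card S) * real d"
    proof -
    assume e: "(\<Sum>s\<in>S. card {i\<in>D. s ! i = w ! i}) = (\<Sum>i\<in>D. card {s\<in>S. s ! i = w ! i})"
      and l: "(\<Sum>s\<in>S. card {i\<in>D. s ! i = w ! i}) \<le> (\<Sum>s\<in>S. d)"
    have "(\<Sum>i\<in>D. card {s\<in>S. s ! i = w ! i}) \<le> card S * d" using e l by simp
    then show ?thesis unfolding of_nat_mult[symmetric] of_nat_le_iff .
  qed
  have "real (\<Sum>i\<in>D. card {s\<in>S. s ! i = w ! i}) = (\<Sum>i\<in>D. real (card {s\<in>S. s ! i = w ! i}))"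
    by simp
  also have "\<dots> \<ge> (\<Sum>i\<in>D. real (card S) / (2 * real k))"
    by (rule sum_mono) (use orig D_def in auto)
  finally have "real (card D) * (real (card S) / (2 * real k)) \<le> real (card S) * real d"
    using A by simp
  hence "real (card D) * real (card S) \<le> real (card S) * real d * (2 * real k)"
    using kpos by (simp add: field_simps)
  hence "real (card D) \<le> real d * (2 * real k)" using Sne by (simp add: field_simps)
  hence cD: "card D \<le> 2 * k * d" proof -
    assume h: "real (card D) \<le> real d * (2 * real k)"
    have "real d * (2 * real k) = real (2 * k * d)" by simp
    with h show ?thesis by linarith
  qed
  have "{i. i < length w \<and> w ! i \<noteq> s0 ! i} \<subseteq> D \<union> {i. i < length c \<and> c ! i \<noteq> s0 ! i}"
    unfolding D_def using lw lc by auto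
  hence "hdist w s0 \<le> card D + hdist c s0" unfolding hdist_def
    by (metis (no_types, lifting) card_Un_le card_mono finD finite_Un finite_nat_set_iff_bounded mem_Collect_eq order_trans)
  also have "\<dots> \<le> 2 * k * d + d" using cD cd[OF s0] by simp
  also have "\<dots> \<le> 4 * k * d" using kpos by (simp add: mult_le_mono)
  finally show False using far by simp
qed

end
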